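(* A norm $\gamma$ on $\mathbb{R}^d$ is uniformly robust if and only if $\mathrm{EH}_\gamma(A)$ is bounded for every finite set $A\subset\mathbb{R}^d$.
   Context: A norm is a symmetric gauge (Minkowski functional of a symmetric convex compact set $B_\gamma$ with $0$ in its interior); its skewness $\sigma=\sup_{x\ne0}\gamma(x)/\gamma(-x)$ equals $1$. $\gamma^\circ$ is the dual norm with unit ball $B_{\gamma^\circ}$. For weighted sets, $(D,w)+(C,v)$ is $D\cup C$ with weights added at common points. A Fermat–Weber point of a finite positively weighted set is a minimizer of $x\mapsto\sum_s u_s\gamma(x-s)$. The gauge $\gamma$ is called uniformly robust if for every finite set $D$ with positive weights $w$ (total $w_D$) there is a bounded set $K$ such that for every finite set $C$ with positive weights $v$ satisfying $\sigma v_C<w_D$, all Fermat–Weber points of $(D,w)+(C,v)$ lie in $K$. For $p\in B_{\gamma^\circ}$: if $\gamma^\circ(p)=1$, $N(p)=\mathbb{R}_{\ge0}F(p)$ with $F(p)=\{x\in B_\gamma:\langle p,x\rangle=1\}$; otherwise $N(p)=\{0\}$. For finite $S$ and $\pi=(p_s)_{s\in S}\subset B_{\gamma^\circ}$, $C_\pi=\bigcap_{s\in S}(s+N(p_s))$; a nonempty $C_\pi$ is an elementary convex set for $S$; $\mathrm{EH}_\gamma(S)$ is the union of all bounded elementary convex sets for $S$. *)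

theory Defs
  imports "HOL-Analysis.Analysis"
begin

definition is_norm :: "('a::euclidean_space \<Rightarrow> real) \<Rightarrow> bool" where
  "is_norm \<gamma> \<longleftrightarrow>
     (\<forall>x. 0 \<le> \<gamma> x) \<and> (\<forall>x. \<gamma> x = 0 \<longleftrightarrow> x = 0) \<and>
     (\<forall>x y. \<gamma> (x + y) \<le> \<gamma> x + \<gamma> y) \<and>
     (\<forall>c x. \<gamma> (c *\<^sub>R x) = \<bar>c\<bar> * \<gamma> x)"

definition skewness :: "('a::euclidean_space \<Rightarrow> real) \<Rightarrow> real" where
  "skewness \<gamma> = (SUP x\<in>UNIV - {0}. \<gamma> x / \<gamma> (- x))"

definition unit_ball :: "('a::euclidean_space \<Rightarrow> real) \<Rightarrow> 'a set" where
  "unit_ball \<gamma> = {x. \<gamma> x \<le> 1}"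

definition dual_gauge :: "('a::euclidean_space \<Rightarrow> real) \<Rightarrow> 'a \<Rightarrow> real" where
  "dual_gauge \<gamma> p = Sup {inner p x | x. \<gamma> x \<le> 1}"

definition fw_objective :: "('a::euclidean_space \<Rightarrow> real) \<Rightarrow> 'a set \<Rightarrow> ('a \<Rightarrow> real) \<Rightarrow> 'a \<Rightarrow> real" where
  "fw_objective \<gamma> S u x = (\<Sum>s\<in>S. u s * \<gamma> (x - s))"

definition is_FW_point :: "('a::euclidean_space \<Rightarrow> real) \<Rightarrow> 'a set \<Rightarrow> ('a \<Rightarrow> real) \<Rightarrow> 'a \<Rightarrow> bool" where
  "is_FW_point \<gamma> S u x \<longleftrightarrow> (\<forall>y. fw_objective \<gamma> S u x \<le> fw_objective \<gamma> S u y)"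

text \<open>Sum of weighted sets: (D,w)+(C,v) = (D \<union> C, weights added at common points).\<close>
definition wsum_weights :: "'a set \<Rightarrow> ('a \<Rightarrow> real) \<Rightarrow> 'a set \<Rightarrow> ('a \<Rightarrow> real) \<Rightarrow> 'a \<Rightarrow> real" where
  "wsum_weights D w C v s = (if s \<in> D then w s else 0) + (if s \<in> C then v s else 0)"

definition uniformly_robust :: "('a::euclidean_space \<Rightarrow> real) \<Rightarrow> bool" where
  "uniformly_robust \<gamma> \<longleftrightarrow>
     (\<forall>D w. finite D \<and> (\<forall>s\<in>D. 0 < w s) \<longrightarrow>
        (\<exists>K. bounded K \<and>
           (\<forall>C v. finite C \<and> (\<forall>s\<in>C. 0 < v s) \<and> skewness \<gamma> * sum v C < sum w D \<longrightarrow>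
              {x. is_FW_point \<gamma> (D \<union> C) (wsum_weights D w C v) x} \<subseteq> K)))"

definition face :: "('a::euclidean_space \<Rightarrow> real) \<Rightarrow> 'a \<Rightarrow> 'a set" where
  "face \<gamma> p = {x \<in> unit_ball \<gamma>. inner p x = 1}"

definition ncone :: "('a::euclidean_space \<Rightarrow> real) \<Rightarrow> 'a \<Rightarrow> 'a set" where
  "ncone \<gamma> p = (if dual_gauge \<gamma> p = 1 then {t *\<^sub>R x | t x. 0 \<le> t \<and> x \<in> face \<gamma> p} else {0})"

text \<open>C_pi = intersection over s in S of (s + N(p_s)); for S empty this is UNIV.\<close>
definition elem_set :: "('a::euclidean_space \<Rightarrow> real) \<Rightarrow> 'a set \<Rightarrow> ('a \<Rightarrow> 'a) \<Rightarrow> 'a set" where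
  "elem_set \<gamma> S p = (\<Inter>s\<in>S. (\<lambda>y. s + y) ` ncone \<gamma> (p s))"

definition EH :: "('a::euclidean_space \<Rightarrow> real) \<Rightarrow> 'a set \<Rightarrow> 'a set" where
  "EH \<gamma> S = \<Union> {E. \<exists>p. (\<forall>s\<in>S. p s \<in> unit_ball (dual_gauge \<gamma>)) \<and>
                       E = elem_set \<gamma> S p \<and> E \<noteq> {} \<and> bounded E}"

end

theory Submission
  imports Defs
begin


lemma common_subseq:
  fixes g :: "'i \<Rightarrow> nat \<Rightarrow> 'a::euclidean_space"
  assumes "finite S" "compact K" "\<forall>s\<in>S. \<forall>n. g s n \<in> K"
  shows "\<exists>r l. strict_mono r \<and> (\<forall>s\<in>S. l s \<in> K \<and> (g s \<circ> r) \<longlonglongrightarrow> l s)"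
  using assms
proof (induction S rule: finite_induct)
  case empty
  show ?case by (rule exI[of _ id]) (auto simp: strict_mono_def)
next
  case (insert a S)
  then obtain r l where r: "strict_mono r" "\<forall>s\<in>S. l s \<in> K \<and> (g s \<circ> r) \<longlonglongrightarrow> l s" by blast
  have "seq_compact K" using insert(4) compact_imp_seq_compact by blast
  moreover have "\<forall>n. (g a \<circ> r) n \<in> K" using insert(5) by auto
  ultimately obtain la r' where r': "la \<in> K" "strict_mono r'" "(g a \<circ> r \<circ> r') \<longlonglongrightarrow> la"
    by (metis seq_compactE)
  show ?case
  proof (intro exI conjI)
    show "strict_mono (r \<circ> r')" using r r' strict_mono_o by blast
    show "\<forall>s\<in>insert a S. (l(a:=la)) s \<in> K \<and> (g s \<circ> (r \<circ> r')) \<longlonglongrightarrow> (l(a:=la)) s"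
    proof
      fix s assume s: "s \<in> insert a S"
      show "(l(a:=la)) s \<in> K \<and> (g s \<circ> (r \<circ> r')) \<longlonglongrightarrow> (l(a:=la)) s"
      proof (cases "s = a")
        case True then show ?thesis using r' by (simp add: o_assoc)
      next
        case False
        then have "s \<in> S" using s by auto
        then have "(g s \<circ> r \<circ> r') \<longlonglongrightarrow> l s" using r LIMSEQ_subseq_LIMSEQ r' by blast
        then show ?thesis using False r \<open>s\<in>S\<close> by (simp add: o_assoc)
      qed
    qed
  qed
qed

lemma sumset_cc:
  fixes P :: "'i \<Rightarrow> 'a::euclidean_space set"
  assumes "finite S" "\<forall>s\<in>S. compact (P s) \<and> convex (P s)"
  shows "compact {\<Sum>s\<in>S. u s *\<^sub>R p s | p. \<forall>s\<in>S. p s \<in> P s} \<and>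
         convex {\<Sum>s\<in>S. u s *\<^sub>R p s | p. \<forall>s\<in>S. p s \<in> P s}"
  using assms
proof (induction S rule: finite_induct)
  case empty
  have "{\<Sum>s\<in>{}. u s *\<^sub>R p s | p. \<forall>s\<in>{}. p s \<in> P s} = {0::'a}" by auto
  then show ?case by simp
next
  case (insert a S)
  let ?M = "{\<Sum>s\<in>S. u s *\<^sub>R p s | p. \<forall>s\<in>S. p s \<in> P s}"
  let ?Q = "(\<lambda>x. u a *\<^sub>R x) ` P a"
  have IH: "compact ?M" "convex ?M" using insert by auto
  have Pa: "compact ?Q" "convex ?Q" using insert(4) compact_scaling convex_scaling by auto
  have eq: "{\<Sum>s\<in>insert a S. u s *\<^sub>R p s | p. \<forall>s\<in>insert a S. p s \<in> P s} = {x + y | x y. x \<in> ?Q \<and> y \<in> ?M}"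
  proof (rule set_eqI, rule iffI)
    fix z assume "z \<in> {\<Sum>s\<in>insert a S. u s *\<^sub>R p s | p. \<forall>s\<in>insert a S. p s \<in> P s}"
    then obtain p where p: "z = (\<Sum>s\<in>insert a S. u s *\<^sub>R p s)" "\<forall>s\<in>insert a S. p s \<in> P s" by auto
    then have "z = u a *\<^sub>R p a + (\<Sum>s\<in>S. u s *\<^sub>R p s)" using insert(1,2) by simp
    then show "z \<in> {x + y | x y. x \<in> ?Q \<and> y \<in> ?M}" using p(2) by blast
  next
    fix z assume "z \<in> {x + y | x y. x \<in> ?Q \<and> y \<in> ?M}"
    then obtain q p where qp: "z = u a *\<^sub>R q + (\<Sum>s\<in>S. u s *\<^sub>R p s)" "q \<in> P a" "\<forall>s\<in>S. p s \<in> P s" by blast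
    have "(\<Sum>s\<in>S. u s *\<^sub>R (p(a:=q)) s) = (\<Sum>s\<in>S. u s *\<^sub>R p s)"
      using insert(2) by (intro sum.cong) auto
    then have "z = (\<Sum>s\<in>insert a S. u s *\<^sub>R (p(a:=q)) s)" using qp insert(1,2) by simp
    moreover have "\<forall>s\<in>insert a S. (p(a:=q)) s \<in> P s" using qp by auto
    ultimately show "z \<in> {\<Sum>s\<in>insert a S. u s *\<^sub>R p s | p. \<forall>s\<in>insert a S. p s \<in> P s}" by blast
  qed
  have "convex {x + y | x y. x \<in> ?Q \<and> y \<in> ?M}"
  proof -
    have "{x + y | x y. x \<in> ?Q \<and> y \<in> ?M} = (\<Union>x\<in>?Q. \<Union>y\<in>?M. {x + y})" by blast
    then show ?thesis using convex_sums[OF Pa(2) IH(2)] by simp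
  qed
  then show ?case unfolding eq using compact_sums[OF Pa(1) IH(1)] by simp
qed




locale nrm =
  fixes \<gamma> :: "'a::euclidean_space \<Rightarrow> real"
  assumes N: "is_norm \<gamma>"
begin

lemma nonneg: "0 \<le> \<gamma> x" using N unfolding is_norm_def by blast
lemma zero_iff: "\<gamma> x = 0 \<longleftrightarrow> x = 0" using N unfolding is_norm_def by blast
lemma triangle: "\<gamma> (x + y) \<le> \<gamma> x + \<gamma> y" using N unfolding is_norm_def by blast
lemma scale: "\<gamma> (c *\<^sub>R x) = \<bar>c\<bar> * \<gamma> x" using N unfolding is_norm_def by blast
lemma zero[simp]: "\<gamma> 0 = 0" using zero_iff by blast
lemma pos: "x \<noteq> 0 \<Longrightarrow> 0 < \<gamma> x" using nonneg zero_iff by (metis less_eq_real_def)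
lemma minus: "\<gamma> (- x) = \<gamma> x" using scale[of "-1" x] by simp
lemma diff_le: "\<gamma> x - \<gamma> y \<le> \<gamma> (x - y)" using triangle[of "x - y" y] by simp
lemma abs_diff_le: "\<bar>\<gamma> x - \<gamma> y\<bar> \<le> \<gamma> (x - y)"
  using diff_le[of x y] diff_le[of y x] minus[of "x - y"] by (simp add: abs_le_iff)

lemma sum_le: "finite I \<Longrightarrow> \<gamma> (\<Sum>i\<in>I. f i) \<le> (\<Sum>i\<in>I. \<gamma> (f i))"
  by (induction I rule: finite_induct) (auto intro: order_trans[OF triangle])

definition CC where "CC = (\<Sum>i\<in>Basis. \<gamma> i)"

lemma CC_pos: "0 < CC"
proof -
  obtain b :: 'a where "b \<in> Basis" using nonempty_Basis by blast
  then have "0 < \<gamma> b" using pos by (metis nonzero_Basis)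
  then show ?thesis unfolding CC_def using \<open>b\<in>Basis\<close>
    by (meson finite_Basis nonneg sum_pos2)
qed

lemma upper: "\<gamma> x \<le> CC * norm x"
proof -
  have "\<gamma> x = \<gamma> (\<Sum>i\<in>Basis. (x \<bullet> i) *\<^sub>R i)" by (simp add: euclidean_representation)
  also have "\<dots> \<le> (\<Sum>i\<in>Basis. \<gamma> ((x \<bullet> i) *\<^sub>R i))" by (rule sum_le) simp
  also have "\<dots> = (\<Sum>i\<in>Basis. \<bar>x \<bullet> i\<bar> * \<gamma> i)" by (simp add: scale)
  also have "\<dots> \<le> (\<Sum>i\<in>Basis. norm x * \<gamma> i)"
    by (intro sum_mono mult_right_mono) (auto simp: Basis_le_norm nonneg)
  finally show ?thesis by (simp add: CC_def sum_distrib_left mult.commute)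
qed

lemma lip: "CC-lipschitz_on UNIV \<gamma>"
proof (rule lipschitz_onI)
  fix x y :: 'a
  have "\<bar>\<gamma> x - \<gamma> y\<bar> \<le> CC * norm (x - y)" using abs_diff_le upper order_trans by blast
  then show "dist (\<gamma> x) (\<gamma> y) \<le> CC * dist x y" by (simp add: dist_real_def dist_norm)
qed (use CC_pos in simp)

lemma cont: "continuous_on S \<gamma>"
  using lipschitz_on_continuous_on[OF lip] continuous_on_subset by blast

lemma cont_at: "isCont \<gamma> x"
  using cont[of UNIV] continuous_on_eq_continuous_at by blast

lemma lower_ex: "\<exists>c>0. \<forall>x. c * norm x \<le> \<gamma> x"
proof -
  have "compact (sphere (0::'a) 1)" by simp
  moreover have "sphere (0::'a) 1 \<noteq> {}" by simp
  ultimately obtain x0 where x0: "x0 \<in> sphere 0 1" "\<forall>y\<in>sphere 0 1. \<gamma> x0 \<le> \<gamma> y"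
    using continuous_attains_inf[OF _ _ cont] by blast
  have "x0 \<noteq> 0" using x0(1) by auto
  then have c: "0 < \<gamma> x0" using pos by blast
  have "\<gamma> x0 * norm x \<le> \<gamma> x" for x
  proof (cases "x = 0")
    case False
    then have "(1 / norm x) *\<^sub>R x \<in> sphere 0 1" by simp
    then have "\<gamma> x0 \<le> \<gamma> ((1 / norm x) *\<^sub>R x)" using x0 by blast
    also have "\<dots> = \<gamma> x / norm x" by (simp add: scale)
    finally show ?thesis using False by (simp add: field_simps)
  qed simp
  then show ?thesis using c by blast
qed

definition cl where "cl = (SOME c. c > 0 \<and> (\<forall>x. c * norm x \<le> \<gamma> x))"
lemma cl: "cl > 0" "cl * norm x \<le> \<gamma> x"
  using someI_ex[OF lower_ex] unfolding cl_def by blast+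

lemma norm_le: "norm x \<le> \<gamma> x / cl" using cl by (simp add: field_simps mult.commute)

definition dual where "dual p \<longleftrightarrow> (\<forall>y. inner p y \<le> \<gamma> y)"

lemma ball_bdd: "bdd_above {inner p x | x. \<gamma> x \<le> 1}"
proof (rule bdd_aboveI)
  fix r assume "r \<in> {inner p x | x. \<gamma> x \<le> 1}"
  then obtain x where x: "r = inner p x" "\<gamma> x \<le> 1" by auto
  have "norm x \<le> 1 / cl" using norm_le[of x] x(2) cl(1) divide_right_mono[of "\<gamma> x" 1 cl] by linarith
  then have "inner p x \<le> norm p * (1/cl)"
    by (meson Cauchy_Schwarz_ineq2 abs_le_D1 mult_left_mono norm_ge_zero order_trans)
  then show "r \<le> norm p * (1/cl)" using x by simp
qed

lemma dg_upper: "\<gamma> x \<le> 1 \<Longrightarrow> inner p x \<le> dual_gauge \<gamma> p"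
  unfolding dual_gauge_def by (rule cSup_upper[OF _ ball_bdd]) auto

lemma dual_alt: "(\<forall>y. \<gamma> y \<le> 1 \<longrightarrow> inner p y \<le> 1) \<longleftrightarrow> dual p"
proof
  assume H: "\<forall>y. \<gamma> y \<le> 1 \<longrightarrow> inner p y \<le> 1"
  show "dual p" unfolding dual_def
  proof
    fix y show "inner p y \<le> \<gamma> y"
    proof (cases "y = 0")
      case False
      then have g: "0 < \<gamma> y" by (rule pos)
      have "\<gamma> ((1 / \<gamma> y) *\<^sub>R y) = 1" using g by (simp add: scale)
      then have "inner p ((1 / \<gamma> y) *\<^sub>R y) \<le> 1" using \<open>\<gamma> ((1 / \<gamma> y) *\<^sub>R y) = 1\<close> by (intro H[rule_format]) simp
      then have "inner p y / \<gamma> y \<le> 1" by simp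
      then show ?thesis using g by (simp add: divide_le_eq)
    qed simp
  qed
qed (auto simp: dual_def intro: order_trans)

lemma dual_iff: "dual_gauge \<gamma> p \<le> 1 \<longleftrightarrow> dual p"
proof -
  have "dual_gauge \<gamma> p \<le> 1 \<longleftrightarrow> (\<forall>r\<in>{inner p x | x. \<gamma> x \<le> 1}. r \<le> 1)"
    unfolding dual_gauge_def by (rule cSup_le_iff) (use ball_bdd in \<open>auto intro: exI[of _ 0]\<close>)
  also have "\<dots> \<longleftrightarrow> dual p" using dual_alt by blast
  finally show ?thesis .
qed

lemma dual_ball: "p \<in> unit_ball (dual_gauge \<gamma>) \<longleftrightarrow> dual p"
  unfolding unit_ball_def using dual_iff by simp

lemma compact_B: "compact {x. \<gamma> x \<le> 1}"
proof -
  have "bounded {x. \<gamma> x \<le> 1}"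
    unfolding bounded_iff using norm_le cl(1)
    by (metis (mono_tags) divide_right_mono less_eq_real_def mem_Collect_eq order_trans)
  moreover have "closed {x. \<gamma> x \<le> 1}"
    using closed_Collect_le[OF cont[of UNIV] continuous_on_const]
    by simp
  ultimately show ?thesis by (simp add: compact_eq_bounded_closed)
qed

lemma face_ne: "dual_gauge \<gamma> p = 1 \<Longrightarrow> \<exists>x. x \<in> face \<gamma> p"
proof -
  assume D: "dual_gauge \<gamma> p = 1"
  have ne: "{x. \<gamma> x \<le> 1} \<noteq> {}" by (auto intro: exI[of _ 0])
  obtain x0 where x0: "x0 \<in> {x. \<gamma> x \<le> 1}" "\<forall>y\<in>{x. \<gamma> x \<le> 1}. inner p y \<le> inner p x0"
    using continuous_attains_sup[OF compact_B ne continuous_on_inner[OF continuous_on_const continuous_on_id]]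
    by blast
  have "dual_gauge \<gamma> p \<le> inner p x0" unfolding dual_gauge_def
    by (rule cSup_least) (use x0 in auto)
  moreover have "inner p x0 \<le> dual_gauge \<gamma> p" using dg_upper x0 by auto
  ultimately have "inner p x0 = 1" using D by simp
  then show ?thesis using x0 unfolding face_def unit_ball_def by auto
qed

lemma ncone_iff:
  assumes "dual p"
  shows "y \<in> ncone \<gamma> p \<longleftrightarrow> inner p y = \<gamma> y"
proof
  assume y: "y \<in> ncone \<gamma> p"
  show "inner p y = \<gamma> y"
  proof (cases "dual_gauge \<gamma> p = 1")
    case True
    then obtain t x where tx: "y = t *\<^sub>R x" "0 \<le> t" "x \<in> face \<gamma> p" using y unfolding ncone_def by auto
    then have "\<gamma> x \<le> 1" "inner p x = 1" unfolding face_def unit_ball_def by auto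
    moreover have "inner p x \<le> \<gamma> x" using assms dual_def by blast
    ultimately have "\<gamma> x = 1" by simp
    then show ?thesis using tx \<open>inner p x = 1\<close> by (simp add: scale)
  next
    case False then show ?thesis using y unfolding ncone_def by simp
  qed
next
  assume y: "inner p y = \<gamma> y"
  show "y \<in> ncone \<gamma> p"
  proof (cases "y = 0")
    case True
    show ?thesis
    proof (cases "dual_gauge \<gamma> p = 1")
      case True
      then obtain x where "x \<in> face \<gamma> p" using face_ne by blast
      then show ?thesis unfolding ncone_def using True \<open>y = 0\<close>
        by (auto intro!: exI[of _ 0] exI[of _ x])
    qed (simp add: ncone_def True)
  next
    case False
    then have g: "0 < \<gamma> y" by (rule pos)
    let ?x = "(1 / \<gamma> y) *\<^sub>R y"
    have gx: "\<gamma> ?x = 1" using g by (simp add: scale)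
    have ix: "inner p ?x = 1" using g y by simp
    have "1 \<le> dual_gauge \<gamma> p" using dg_upper[of ?x p] gx ix by simp
    moreover have "dual_gauge \<gamma> p \<le> 1" using dual_iff assms by blast
    ultimately have D: "dual_gauge \<gamma> p = 1" by simp
    have "?x \<in> face \<gamma> p" unfolding face_def unit_ball_def using gx ix by simp
    moreover have "y = \<gamma> y *\<^sub>R ?x" using g by simp
    ultimately show ?thesis unfolding ncone_def using D g
      by (auto intro!: exI[of _ "\<gamma> y"] exI[of _ ?x])
  qed
qed

lemma elem_iff:
  assumes "\<forall>s\<in>S. dual (p s)"
  shows "y \<in> elem_set \<gamma> S p \<longleftrightarrow> (\<forall>s\<in>S. inner (p s) (y - s) = \<gamma> (y - s))"
proof -
  have "y \<in> (\<lambda>z. s + z) ` ncone \<gamma> (p s) \<longleftrightarrow> y - s \<in> ncone \<gamma> (p s)" for s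
    by (auto intro: image_eqI[of _ _ "y - s"])
  then show ?thesis unfolding elem_set_def using ncone_iff assms by auto
qed

end



lemma wsum_split:
  fixes g :: "'a \<Rightarrow> 'b::real_vector"
  assumes "finite D" "finite C"
  shows "(\<Sum>s\<in>D \<union> C. wsum_weights D w C v s *\<^sub>R g s) = (\<Sum>s\<in>D. w s *\<^sub>R g s) + (\<Sum>s\<in>C. v s *\<^sub>R g s)"
proof -
  have "(\<Sum>s\<in>D \<union> C. wsum_weights D w C v s *\<^sub>R g s) =
        (\<Sum>s\<in>D \<union> C. (if s \<in> D then w s *\<^sub>R g s else 0)) + (\<Sum>s\<in>D \<union> C. (if s \<in> C then v s *\<^sub>R g s else 0))"
  proof -
    have "wsum_weights D w C v s *\<^sub>R g s = (if s \<in> D then w s *\<^sub>R g s else 0) + (if s \<in> C then v s *\<^sub>R g s else 0)" for s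
      by (simp add: wsum_weights_def scaleR_add_left)
    then show ?thesis by (simp add: sum.distrib)
  qed
  also have "(\<Sum>s\<in>D \<union> C. (if s \<in> D then w s *\<^sub>R g s else 0)) = (\<Sum>s\<in>D. w s *\<^sub>R g s)"
    using sum.inter_restrict[of "D \<union> C" "\<lambda>s. w s *\<^sub>R g s" D] assms by (simp add: Int_absorb1)
  also have "(\<Sum>s\<in>D \<union> C. (if s \<in> C then v s *\<^sub>R g s else 0)) = (\<Sum>s\<in>C. v s *\<^sub>R g s)"
    using sum.inter_restrict[of "D \<union> C" "\<lambda>s. v s *\<^sub>R g s" C] assms by (simp add: Int_absorb1)
  finally show ?thesis .
qed

context nrm begin

lemma convex_B: "convex {x. \<gamma> x \<le> 1}"
  unfolding convex_def
proof (intro ballI allI impI)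
  fix x y :: 'a and a b :: real
  assume "x \<in> {x. \<gamma> x \<le> 1}" "y \<in> {x. \<gamma> x \<le> 1}" and ab: "0 \<le> a" "0 \<le> b" "a + b = 1"
  then have "\<gamma> x \<le> 1" "\<gamma> y \<le> 1" by auto
  have "\<gamma> (a *\<^sub>R x + b *\<^sub>R y) \<le> a * \<gamma> x + b * \<gamma> y"
    using triangle[of "a *\<^sub>R x" "b *\<^sub>R y"] scale ab by simp
  also have "\<dots> \<le> a * 1 + b * 1"
    using ab \<open>\<gamma> x \<le> 1\<close> \<open>\<gamma> y \<le> 1\<close> by (intro add_mono mult_left_mono) auto
  finally show "a *\<^sub>R x + b *\<^sub>R y \<in> {x. \<gamma> x \<le> 1}" using ab by simp
qed

lemma supp: "\<exists>p. dual p \<and> inner p z = \<gamma> z"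
proof (cases "z = 0")
  case True then show ?thesis by (auto simp: dual_def nonneg intro: exI[of _ 0])
next
  case False
  then have gz: "0 < \<gamma> z" by (rule pos)
  define x where "x = (1 / \<gamma> z) *\<^sub>R z"
  have gx: "\<gamma> x = 1" using gz by (simp add: x_def scale)
  have x0: "x \<noteq> 0" using gx by auto
  let ?S = "{x. \<gamma> x \<le> 1}"
  have clS: "closure ?S = ?S" using compact_B by (simp add: compact_imp_closed)
  have opn: "open {y. \<gamma> y < 1}" using open_Collect_less[OF cont[of UNIV] continuous_on_const] by simp
  have "{y. \<gamma> y < 1} \<subseteq> interior ?S" by (rule interior_maximal) (use opn in auto)
  then have "0 \<in> interior ?S" by auto
  then have ri: "rel_interior ?S = interior ?S" using rel_interior_nonempty_interior by blast
  have xni: "x \<notin> rel_interior ?S"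
  proof
    assume "x \<in> rel_interior ?S"
    then have "x \<in> interior ?S" using ri by simp
    then obtain e where e: "e > 0" "ball x e \<subseteq> ?S" using mem_interior by blast
    define y where "y = (1 + e / (2 * norm x)) *\<^sub>R x"
    have nx: "norm x > 0" using x0 by simp
    have "dist x y = e / 2" unfolding y_def dist_norm using nx e
      by (simp add: algebra_simps)
    then have "y \<in> ball x e" using e by simp
    then have "y \<in> ?S" using e(2) by blast
    moreover have "\<gamma> y = 1 + e / (2 * norm x)" unfolding y_def using gx nx e scale
      by (simp add: abs_of_pos)
    moreover have "e / (2 * norm x) > 0" using nx e by simp
    ultimately show False by simp
  qed
  obtain a where a: "a \<noteq> 0" "\<And>y. y \<in> closure ?S \<Longrightarrow> a \<bullet> x \<le> a \<bullet> y"
  proof -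
    have xc: "x \<in> closure ?S" using clS gx by simp
    show ?thesis by (rule supporting_hyperplane_relative_frontier[OF convex_B xc xni]) (rule that)
  qed
  define p' where "p' = - a"
  have p'0: "p' \<noteq> 0" using a by (simp add: p'_def)
  have le: "inner p' y \<le> inner p' x" if "\<gamma> y \<le> 1" for y
    using a(2)[of y] that clS by (simp add: p'_def)
  define y0 where "y0 = (1 / (2 * \<gamma> p')) *\<^sub>R p'"
  have gp: "0 < \<gamma> p'" using pos p'0 by blast
  have "\<gamma> y0 = 1/2" using gp by (simp add: y0_def scale)
  then have "inner p' y0 \<le> inner p' x" using le by simp
  moreover have "inner p' y0 > 0" using gp p'0 by (simp add: y0_def)
  ultimately have kp: "inner p' x > 0" by simp
  define p where "p = (1 / inner p' x) *\<^sub>R p'"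
  have "\<forall>y. \<gamma> y \<le> 1 \<longrightarrow> inner p y \<le> 1"
    using le kp by (simp add: p_def divide_le_eq)
  then have "dual p" using dual_alt by blast
  moreover have "inner p x = 1" using kp by (simp add: p_def)
  moreover have "z = \<gamma> z *\<^sub>R x" using gz by (simp add: x_def)
  ultimately show ?thesis
    by (metis inner_scaleR_right mult.right_neutral)
qed

lemma skew: "skewness \<gamma> = 1"
proof -
  obtain b :: 'a where b: "b \<in> Basis" using nonempty_Basis by blast
  then have ne: "UNIV - {0::'a} \<noteq> {}" using nonzero_Basis by blast
  have "skewness \<gamma> = (SUP x\<in>UNIV - {0::'a}. (1::real))"
  proof -
    have H: "\<gamma> x / \<gamma> (- x) = 1" if "x \<in> UNIV - {0}" for x :: 'a
    proof -
      have "\<gamma> x > 0" using pos that by auto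
      then show "\<gamma> x / \<gamma> (- x) = 1" by (simp add: minus)
    qed
    have "(\<lambda>x. \<gamma> x / \<gamma> (- x)) ` (UNIV - {0}) = (\<lambda>x. 1) ` (UNIV - {0::'a})"
      by (rule image_cong[OF refl H])
    then show ?thesis unfolding skewness_def by simp
  qed
  also have "\<dots> = 1" using ne by simp
  finally show ?thesis .
qed

definition DB where "DB = {q. dual q}"

lemma DB_eq: "DB = (\<Inter>y. {q. inner y q \<le> \<gamma> y})"
  unfolding DB_def dual_def by (auto simp: inner_commute)

lemma compact_DB: "compact DB"
proof -
  have "closed DB" unfolding DB_eq by (intro closed_INT) (auto intro: closed_halfspace_le)
  moreover have "bounded DB"
    unfolding bounded_iff
  proof (intro exI ballI)
    fix q assume "q \<in> DB"
    then have "inner q q \<le> \<gamma> q" unfolding DB_def dual_def by blast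
    also have "\<dots> \<le> CC * norm q" by (rule upper)
    finally have "norm q * norm q \<le> CC * norm q" by (simp add: power2_norm_eq_inner[symmetric] power2_eq_square)
    then show "norm q \<le> CC"
      by (cases "norm q = 0") (use CC_pos in \<open>auto simp: mult_le_cancel_right\<close>)
  qed
  ultimately show ?thesis by (simp add: compact_eq_bounded_closed)
qed

lemma convex_DB: "convex DB"
  unfolding DB_eq by (intro convex_INT) (auto intro: convex_halfspace_le)

end



context nrm begin

lemma fw_decomp:
  assumes S: "finite S" and u: "\<forall>s\<in>S. 0 \<le> u s" and fw: "is_FW_point \<gamma> S u x"
  shows "\<exists>p. (\<forall>s\<in>S. dual (p s) \<and> inner (p s) (x - s) = \<gamma> (x - s)) \<and> (\<Sum>s\<in>S. u s *\<^sub>R p s) = 0"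
proof (rule ccontr)
  assume nex: "\<not> ?thesis"
  define P where "P s = DB \<inter> {q. inner (x - s) q = \<gamma> (x - s)}" for s
  have Pcc: "\<forall>s\<in>S. compact (P s) \<and> convex (P s)"
    unfolding P_def using compact_DB convex_DB
    by (auto intro!: compact_Int_closed closed_hyperplane convex_Int convex_hyperplane)
  define M where "M = {\<Sum>s\<in>S. u s *\<^sub>R p s | p. \<forall>s\<in>S. p s \<in> P s}"
  have Mcc: "compact M" "convex M" unfolding M_def using sumset_cc[OF S Pcc] by auto
  have "0 \<notin> M"
  proof
    assume "0 \<in> M"
    then obtain p where p: "0 = (\<Sum>s\<in>S. u s *\<^sub>R p s)" "\<forall>s\<in>S. p s \<in> P s" unfolding M_def by blast
    then have "\<forall>s\<in>S. dual (p s) \<and> inner (p s) (x - s) = \<gamma> (x - s)"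
      unfolding P_def DB_def by (auto simp: inner_commute)
    then show False using nex p(1) by metis
  qed
  then obtain a b where ab: "inner a 0 < b" "\<forall>q\<in>M. inner a q > b"
    using separating_hyperplane_closed_point[OF Mcc(2) compact_imp_closed[OF Mcc(1)]] by blast
  define d where "d = - a"
  define t where "t n = 1 / real (Suc n)" for n
  have tpos: "t n > 0" for n unfolding t_def by simp
  define g where "g s n = (SOME q. dual q \<and> inner q (x - s + t n *\<^sub>R d) = \<gamma> (x - s + t n *\<^sub>R d))" for s n
  have g: "dual (g s n) \<and> inner (g s n) (x - s + t n *\<^sub>R d) = \<gamma> (x - s + t n *\<^sub>R d)" for s n
    unfolding g_def by (rule someI_ex[OF supp])
  have sum_nonneg: "0 \<le> (\<Sum>s\<in>S. u s * inner (g s n) d)" for n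
  proof -
    have "fw_objective \<gamma> S u x \<le> fw_objective \<gamma> S u (x + t n *\<^sub>R d)"
      using fw unfolding is_FW_point_def by blast
    also have "\<dots> = (\<Sum>s\<in>S. u s * \<gamma> (x - s + t n *\<^sub>R d))"
      unfolding fw_objective_def by (intro sum.cong) (auto simp: algebra_simps)
    also have "\<dots> \<le> (\<Sum>s\<in>S. u s * (\<gamma> (x - s) + t n * inner (g s n) d))"
    proof (intro sum_mono mult_left_mono)
      fix s assume "s \<in> S"
      have "\<gamma> (x - s + t n *\<^sub>R d) = inner (g s n) (x - s) + t n * inner (g s n) d"
        using g[of s n] by (simp add: inner_add_right)
      moreover have "inner (g s n) (x - s) \<le> \<gamma> (x - s)" using g[of s n] unfolding dual_def by blast
      ultimately show "\<gamma> (x - s + t n *\<^sub>R d) \<le> \<gamma> (x - s) + t n * inner (g s n) d" by simp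
    qed (use u in auto)
    also have "\<dots> = fw_objective \<gamma> S u x + t n * (\<Sum>s\<in>S. u s * inner (g s n) d)"
      unfolding fw_objective_def by (simp add: algebra_simps sum.distrib sum_distrib_left)
    finally have "0 \<le> t n * (\<Sum>s\<in>S. u s * inner (g s n) d)" by simp
    then show ?thesis using tpos[of n] by (simp add: zero_le_mult_iff)
  qed
  have gDB: "\<forall>s\<in>S. \<forall>n. g s n \<in> DB" using g unfolding DB_def by blast
  obtain r l where rl: "strict_mono r" "\<forall>s\<in>S. l s \<in> DB \<and> (g s \<circ> r) \<longlonglongrightarrow> l s"
    using common_subseq[OF S compact_DB gDB] by blast
  have t0: "(t \<circ> r) \<longlonglongrightarrow> 0"
  proof -
    have "t \<longlonglongrightarrow> 0" unfolding t_def using LIMSEQ_Suc[OF lim_1_over_n] by simp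
    then show ?thesis using LIMSEQ_subseq_LIMSEQ rl(1) by blast
  qed
  have lP: "l s \<in> P s" if s: "s \<in> S" for s
  proof -
    have gl: "(\<lambda>n. g s (r n)) \<longlonglongrightarrow> l s" using rl(2) s by (simp add: o_def)
    have tl: "(\<lambda>n. t (r n)) \<longlonglongrightarrow> 0" using t0 by (simp add: o_def)
    have arg: "(\<lambda>n. x - s + t (r n) *\<^sub>R d) \<longlonglongrightarrow> x - s"
      using tendsto_add[OF tendsto_const tendsto_scaleR[OF tl tendsto_const], of "x - s" d] by simp
    have L1: "(\<lambda>n. inner (g s (r n)) (x - s + t (r n) *\<^sub>R d)) \<longlonglongrightarrow> inner (l s) (x - s)"
      by (rule tendsto_inner[OF gl arg])
    have L2: "(\<lambda>n. \<gamma> (x - s + t (r n) *\<^sub>R d)) \<longlonglongrightarrow> \<gamma> (x - s)"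
      by (rule isCont_tendsto_compose[OF cont_at arg])
    have "inner (l s) (x - s) = \<gamma> (x - s)"
      using LIMSEQ_unique[OF L1] L2 g by presburger
    then show ?thesis unfolding P_def using rl(2) s by (auto simp: inner_commute)
  qed
  have "(\<lambda>n. \<Sum>s\<in>S. u s * inner (g s (r n)) d) \<longlonglongrightarrow> (\<Sum>s\<in>S. u s * inner (l s) d)"
  proof (intro tendsto_sum tendsto_mult tendsto_const tendsto_inner)
    fix s assume "s \<in> S"
    then show "(\<lambda>n. g s (r n)) \<longlonglongrightarrow> l s" using rl(2) by (simp add: o_def)
  qed
  then have lsum: "0 \<le> (\<Sum>s\<in>S. u s * inner (l s) d)"
    by (rule LIMSEQ_le_const) (use sum_nonneg in auto)
  have "(\<Sum>s\<in>S. u s *\<^sub>R l s) \<in> M" unfolding M_def using lP by blast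
  then have "inner a (\<Sum>s\<in>S. u s *\<^sub>R l s) > b" using ab by blast
  moreover have "inner a (\<Sum>s\<in>S. u s *\<^sub>R l s) = - (\<Sum>s\<in>S. u s * inner (l s) d)"
    by (simp add: d_def inner_sum_right sum_negf inner_commute)
  moreover have "b > 0" using ab by simp
  ultimately show False using lsum by simp
qed

end



context nrm begin

lemma dir1:
  assumes H: "\<forall>A::'a set. finite A \<longrightarrow> bounded (EH \<gamma> A)"
  shows "uniformly_robust \<gamma>"
  unfolding uniformly_robust_def
proof (intro allI impI)
  fix D :: "'a set" and w :: "'a \<Rightarrow> real"
  assume Dw: "finite D \<and> (\<forall>s\<in>D. 0 < w s)"
  show "\<exists>K. bounded K \<and> (\<forall>C v. finite C \<and> (\<forall>s\<in>C. 0 < v s) \<and> skewness \<gamma> * sum v C < sum w D \<longrightarrow>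
              {x. is_FW_point \<gamma> (D \<union> C) (wsum_weights D w C v) x} \<subseteq> K)"
  proof (intro exI conjI allI impI subsetI)
    show "bounded (EH \<gamma> D)" using H Dw by blast
    fix C v x
    assume Cv: "finite C \<and> (\<forall>s\<in>C. 0 < v s) \<and> skewness \<gamma> * sum v C < sum w D"
      and "x \<in> {x. is_FW_point \<gamma> (D \<union> C) (wsum_weights D w C v) x}"
    then have fw: "is_FW_point \<gamma> (D \<union> C) (wsum_weights D w C v) x" by simp
    have VW: "sum v C < sum w D" using Cv skew by simp
    have fin: "finite (D \<union> C)" using Dw Cv by simp
    have upos: "\<forall>s\<in>D \<union> C. 0 \<le> wsum_weights D w C v s"
      using Dw Cv unfolding wsum_weights_def by (auto intro: add_nonneg_nonneg less_imp_le)
    obtain p where p: "\<forall>s\<in>D \<union> C. dual (p s) \<and> inner (p s) (x - s) = \<gamma> (x - s)"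
      "(\<Sum>s\<in>D \<union> C. wsum_weights D w C v s *\<^sub>R p s) = 0"
      using fw_decomp[OF fin upos fw] by blast
    have psum: "(\<Sum>s\<in>D. w s *\<^sub>R p s) = - (\<Sum>s\<in>C. v s *\<^sub>R p s)"
      using p(2) wsum_split[of D C w v p] Dw Cv by (simp add: eq_neg_iff_add_eq_0)
    have dD: "\<forall>s\<in>D. dual (p s)" using p(1) by auto
    define E where "E = elem_set \<gamma> D p"
    have xE: "x \<in> E" unfolding E_def using elem_iff[OF dD] p(1) by auto
    define c1 where "c1 = (\<Sum>s\<in>D. w s * \<gamma> s)"
    define c2 where "c2 = (\<Sum>s\<in>D. w s * inner (p s) s)"
    have gb: "\<gamma> y \<le> (c1 - c2) / (sum w D - sum v C)" if y: "y \<in> E" for y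
    proof -
      have eq: "\<forall>s\<in>D. inner (p s) (y - s) = \<gamma> (y - s)" using y elem_iff[OF dD] unfolding E_def by blast
      have "sum w D * \<gamma> y - c1 = (\<Sum>s\<in>D. w s * (\<gamma> y - \<gamma> s))"
        by (simp add: c1_def sum_distrib_left sum_distrib_right algebra_simps sum_subtractf)
      also have "\<dots> \<le> (\<Sum>s\<in>D. w s * \<gamma> (y - s))"
        using Dw diff_le by (intro sum_mono mult_left_mono) (auto intro: less_imp_le)
      also have "\<dots> = (\<Sum>s\<in>D. w s * inner (p s) (y - s))" using eq by simp
      also have "\<dots> = (\<Sum>s\<in>D. w s * inner (p s) y) - c2"
        by (simp add: c2_def inner_diff_right algebra_simps sum_subtractf)
      also have "(\<Sum>s\<in>D. w s * inner (p s) y) = inner (\<Sum>s\<in>D. w s *\<^sub>R p s) y"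
        by (simp add: inner_sum_left)
      also have "\<dots> = (\<Sum>s\<in>C. v s * inner (p s) (- y))"
        by (simp add: psum inner_sum_left sum_negf)
      also have "\<dots> \<le> (\<Sum>s\<in>C. v s * \<gamma> y)"
      proof (intro sum_mono mult_left_mono)
        fix s assume "s \<in> C"
        then have "dual (p s)" using p(1) by auto
        then show "inner (p s) (- y) \<le> \<gamma> y" unfolding dual_def using minus by metis
      qed (use Cv in \<open>auto intro: less_imp_le\<close>)
      also have "\<dots> = sum v C * \<gamma> y" by (simp add: sum_distrib_right)
      finally have "(sum w D - sum v C) * \<gamma> y \<le> c1 - c2" by (simp add: algebra_simps)
      then show ?thesis using VW by (simp add: pos_le_divide_eq mult.commute)
    qed
    have "bounded E" unfolding bounded_iff
    proof (intro exI ballI)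
      fix y assume "y \<in> E"
      then have "\<gamma> y / cl \<le> ((c1 - c2) / (sum w D - sum v C)) / cl"
        using gb[OF \<open>y \<in> E\<close>] cl(1) by (intro divide_right_mono) auto
      then show "norm y \<le> ((c1 - c2) / (sum w D - sum v C)) / cl" using norm_le[of y] by linarith
    qed
    moreover have "E \<noteq> {}" using xE by auto
    moreover have "\<forall>s\<in>D. p s \<in> unit_ball (dual_gauge \<gamma>)" using dD dual_ball by blast
    ultimately have "E \<subseteq> EH \<gamma> D" unfolding EH_def E_def by blast
    then show "x \<in> EH \<gamma> D" using xE by blast
  qed
qed

end



context nrm begin

lemma EH_empty: "EH \<gamma> {} = {}"
  unfolding EH_def elem_set_def by auto

lemma dir2:
  assumes UR: "uniformly_robust \<gamma>" and A: "finite A"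
  shows "bounded (EH \<gamma> A)"
proof (cases "A = {}")
  case True then show ?thesis by (simp add: EH_empty)
next
  case Ane: False
  obtain K where K: "bounded K" "\<forall>C v. finite C \<and> (\<forall>s\<in>C. 0 < v s) \<and> skewness \<gamma> * sum v C < sum (\<lambda>_. 1) A \<longrightarrow>
              {x. is_FW_point \<gamma> (A \<union> C) (wsum_weights A (\<lambda>_. 1) C v) x} \<subseteq> K"
    using UR A unfolding uniformly_robust_def by (metis zero_less_one)
  have "EH \<gamma> A \<subseteq> K"
  proof
    fix y assume "y \<in> EH \<gamma> A"
    then obtain p where p: "\<forall>s\<in>A. p s \<in> unit_ball (dual_gauge \<gamma>)" "y \<in> elem_set \<gamma> A p"
      "bounded (elem_set \<gamma> A p)" unfolding EH_def by blast
    have dA: "\<forall>s\<in>A. dual (p s)" using p(1) dual_ball by blast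
    have yE: "\<forall>s\<in>A. inner (p s) (y - s) = \<gamma> (y - s)" using p(2) elem_iff[OF dA] by blast
    define n where "n = real (card A)"
    have npos: "n > 0" using A Ane by (simp add: n_def card_gt_0_iff)
    define f where "f z = (\<Sum>s\<in>A. inner (p s) (- z))" for z
    define Sg where "Sg = {z. \<gamma> z \<le> 1} \<inter> {z. \<gamma> z = 1}"
    have cSg: "compact Sg" unfolding Sg_def
      using compact_B closed_Collect_eq[OF cont[of UNIV] continuous_on_const] by auto
    obtain b :: 'a where "b \<in> Basis" using nonempty_Basis by blast
    then have b0: "b \<noteq> 0" using nonzero_Basis by blast
    then have "(1 / \<gamma> b) *\<^sub>R b \<in> Sg" unfolding Sg_def using pos[OF b0] by (simp add: scale)
    then have neS: "Sg \<noteq> {}" by blast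
    have cf: "continuous_on Sg f" unfolding f_def
      by (intro continuous_intros)
    obtain z0 where z0: "z0 \<in> Sg" "\<forall>z\<in>Sg. f z \<le> f z0"
      using continuous_attains_sup[OF cSg neS cf] by blast
    define m where "m = f z0"
    have gz0: "\<gamma> z0 = 1" using z0 unfolding Sg_def by simp
    have le1: "inner (p s) (- z0) \<le> 1" if "s \<in> A" for s
      using dA that gz0 minus unfolding dual_def by metis
    have mn: "m < n"
    proof (rule ccontr)
      assume "\<not> m < n"
      have "m \<le> n" unfolding m_def f_def n_def
        using sum_mono[of A "\<lambda>s. inner (p s) (- z0)" "\<lambda>_. 1"] le1 by simp
      then have mn': "m = n" using \<open>\<not> m < n\<close> by simp
      have all1: "\<forall>s\<in>A. inner (p s) (- z0) = 1"
      proof (rule ccontr)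
        assume "\<not> ?thesis"
        then obtain s0 where "s0 \<in> A" "inner (p s0) (- z0) < 1" using le1 by force
        then have "(\<Sum>s\<in>A. inner (p s) (- z0)) < (\<Sum>s\<in>A. 1)"
          using sum_strict_mono_ex1[OF A, of "\<lambda>s. inner (p s) (- z0)" "\<lambda>_. 1"] le1 by blast
        then show False using mn' unfolding m_def f_def n_def by simp
      qed
      define d where "d = - z0"
      have gd: "\<gamma> d = 1" using gz0 minus d_def by simp
      have ray: "y + t *\<^sub>R d \<in> elem_set \<gamma> A p" if t: "t \<ge> 0" for t
        unfolding elem_iff[OF dA]
      proof
        fix s assume s: "s \<in> A"
        have "inner (p s) (y + t *\<^sub>R d - s) = \<gamma> (y - s) + t"
          using yE s all1 by (simp add: d_def inner_add_right inner_diff_right algebra_simps)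
        moreover have "\<gamma> (y + t *\<^sub>R d - s) \<le> \<gamma> (y - s) + t"
          using triangle[of "y - s" "t *\<^sub>R d"] scale[of t d] gd t by (simp add: algebra_simps)
        moreover have "inner (p s) (y + t *\<^sub>R d - s) \<le> \<gamma> (y + t *\<^sub>R d - s)"
          using dA s unfolding dual_def by blast
        ultimately show "inner (p s) (y + t *\<^sub>R d - s) = \<gamma> (y + t *\<^sub>R d - s)" by simp
      qed
      obtain B where B: "\<forall>e\<in>elem_set \<gamma> A p. norm e \<le> B" using p(3) unfolding bounded_iff by blast
      have nd: "norm d > 0" proof -
        have "d \<noteq> 0" using gd by auto
        then show ?thesis by simp
      qed
      define t where "t = (\<bar>B\<bar> + norm y + 1) / norm d"
      have t0: "t \<ge> 0" using nd by (simp add: t_def)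
      have "norm (t *\<^sub>R d) \<le> norm (y + t *\<^sub>R d) + norm y"
        using norm_triangle_ineq[of "y + t *\<^sub>R d" "- y"] by simp
      moreover have "norm (t *\<^sub>R d) = \<bar>B\<bar> + norm y + 1" using nd t0 by (simp add: t_def)
      moreover have "norm (y + t *\<^sub>R d) \<le> B" using B ray[OF t0] by blast
      ultimately show False by simp
    qed
    define v where "v = (max m 0 + n) / 2"
    have v: "0 < v" "v < n" using mn npos by (auto simp: v_def)
    have fv: "f z \<le> v * \<gamma> z" for z
    proof (cases "z = 0")
      case True then show ?thesis by (simp add: f_def)
    next
      case False
      then have gz: "\<gamma> z > 0" by (rule pos)
      have "(1 / \<gamma> z) *\<^sub>R z \<in> Sg" unfolding Sg_def using gz by (simp add: scale)
      then have "f ((1 / \<gamma> z) *\<^sub>R z) \<le> m" using z0 m_def by blast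
      moreover have "f ((1 / \<gamma> z) *\<^sub>R z) = f z / \<gamma> z"
        by (simp add: f_def sum_divide_distrib)
      ultimately have "f z \<le> m * \<gamma> z" using gz by (simp add: divide_le_eq)
      also have "\<dots> \<le> v * \<gamma> z" using gz mn by (intro mult_right_mono) (auto simp: v_def)
      finally show ?thesis .
    qed
    have FW: "is_FW_point \<gamma> (A \<union> {y}) (wsum_weights A (\<lambda>_. 1) {y} (\<lambda>_. v)) y"
      unfolding is_FW_point_def
    proof
      fix z
      have obj: "fw_objective \<gamma> (A \<union> {y}) (wsum_weights A (\<lambda>_. 1) {y} (\<lambda>_. v)) x' =
          (\<Sum>s\<in>A. \<gamma> (x' - s)) + v * \<gamma> (x' - y)" for x'
        unfolding fw_objective_def using wsum_split[of A "{y}" "\<lambda>_. 1" "\<lambda>_. v" "\<lambda>s. \<gamma> (x' - s)"] A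
        by simp
      have "(\<Sum>s\<in>A. \<gamma> (y - s)) + (\<Sum>s\<in>A. inner (p s) (z - y)) = (\<Sum>s\<in>A. inner (p s) (z - s))"
        using yE by (simp add: sum.distrib[symmetric] inner_diff_right algebra_simps)
      also have "\<dots> \<le> (\<Sum>s\<in>A. \<gamma> (z - s))"
        using dA unfolding dual_def by (intro sum_mono) blast
      finally have 1: "(\<Sum>s\<in>A. \<gamma> (y - s)) + (\<Sum>s\<in>A. inner (p s) (z - y)) \<le> (\<Sum>s\<in>A. \<gamma> (z - s))" .
      have "- (\<Sum>s\<in>A. inner (p s) (z - y)) = f (z - y)"
      proof -
        have "\<And>s. inner (p s) (y - z) = - inner (p s) (z - y)" by (simp add: inner_diff_right)
        then show ?thesis by (simp add: f_def sum_negf)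
      qed
      also have "\<dots> \<le> v * \<gamma> (z - y)" by (rule fv)
      finally have 2: "- (\<Sum>s\<in>A. inner (p s) (z - y)) \<le> v * \<gamma> (z - y)" .
      show "fw_objective \<gamma> (A \<union> {y}) (wsum_weights A (\<lambda>_. 1) {y} (\<lambda>_. v)) y
          \<le> fw_objective \<gamma> (A \<union> {y}) (wsum_weights A (\<lambda>_. 1) {y} (\<lambda>_. v)) z"
        unfolding obj using 1 2 by simp
    qed
    have "skewness \<gamma> * sum (\<lambda>_. v) {y} < sum (\<lambda>_. 1) A" using skew v by (simp add: n_def)
    then have "{x. is_FW_point \<gamma> (A \<union> {y}) (wsum_weights A (\<lambda>_. 1) {y} (\<lambda>_. v)) x} \<subseteq> K"
      using K(2)[rule_format, of "{y}" "\<lambda>_. v"] v by simp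
    then show "y \<in> K" using FW by blast
  qed
  then show ?thesis using K(1) bounded_subset by blast
qed

end


theorem mainTheorem12:
  fixes \<gamma> :: "'a::euclidean_space \<Rightarrow> real"
  assumes "is_norm \<gamma>"
  shows "uniformly_robust \<gamma> \<longleftrightarrow> (\<forall>A::'a set. finite A \<longrightarrow> bounded (EH \<gamma> A))"
proof -
  interpret nrm \<gamma> using assms by unfold_locales
  show ?thesis using dir1 dir2 by blast
qed

end
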